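(* Assume (A1)–(A3) and $\mu_u,\mu_v>0$, and write $u^*=w^*(\mu_u,p)$, $v^*=w^*(\mu_v,q)$. Then $$\lambda_1(\mu_u,p-cv^* )\sum_{i=1}^n\alpha_i(u_i^* )^2+c^3\lambda_1(\mu_v,q-bu^* )\sum_{i=1}^n\alpha_i(v_i^* )^2\le-\sum_{i=1}^n\alpha_i(cv_i^*-u_i^* )^2(cv_i^*+u_i^* )\le 0,$$ and if equality holds throughout then $u^*=cv^*$ and $bc=1$. In particular, $\lambda_1(\mu_v,q-bu^* )$ and $\lambda_1(\mu_u,p-cv^* )$ cannot both be $\ge 0$ unless both equal $0$, $bc=1$ and $u^*=cv^*$.
   Context: Let $n\ge2$ and $A=(a_{ij})_{n\times n}$ with $a_{ij}\ge0$ for $i\ne j$. The connection matrix $L$ has $L_{ij}=a_{ij}$ for $i\ne j$, $L_{ii}=-\sum_{k\ne i}a_{ki}$. The weighted digraph $\mathcal G$ associated with $A$ has vertices $\{1,\dots,n\}$ and, for $i\ne j$, an arc $(i,j)$ iff $a_{ji}>0$, with weight $a_{ji}$. A cycle is a list of distinct vertices $i_1,\dots,i_k$, $k\ge2$, with arcs $(i_m,i_{m+1})$, $m<k$, and $(i_k,i_1)$; its weight is the product of its arc weights; its reverse has all arcs reversed. $\mathcal G$ is cycle-balanced if for every cycle its reverse is also a cycle of $\mathcal G$ with the same weight. Assumptions: (A1) $b,c>0$, $bc\le1$, $p_i,q_i>0$; (A2) $L$ irreducible; (A3) $\mathcal G$ cycle-balanced. $\mathcal L$ is the matrix with $\mathcal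 L_{ij}=-a_{ij}$ ($i\ne j$), $\mathcal L_{ii}=\sum_{k\ne i}a_{ik}$, and $\alpha_i>0$ is the cofactor of its $i$-th diagonal entry. For $\mu>0$, $r\gg0$, $w^*(\mu,r)\gg0$ is the unique positive equilibrium of $w_i'=\mu\sum_jL_{ij}w_j+w_i(r_i-w_i)$. For $h\in\mathbb R^n$, $\lambda_1(\mu,h)=-s(\mu L+\mathrm{diag}(h_i))$, $s$ denoting the spectral bound (maximal real part of eigenvalues). *)

theory Defs
  imports "Jordan_Normal_Form.Determinant" "Jordan_Normal_Form.Char_Poly"
begin

text \<open>Vertices/indices are 0..n-1. A is an n x n real matrix (only off-diagonal entries used).\<close>

definition conn_matrix :: "nat \<Rightarrow> real mat \<Rightarrow> real mat" where
  "conn_matrix n A = mat n n (\<lambda>(i,j). if i = j then - (\<Sum>k\<in>{0..<n} - {i}. A $$ (k,i)) else A $$ (i,j))"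

definition calL_matrix :: "nat \<Rightarrow> real mat \<Rightarrow> real mat" where
  "calL_matrix n A = mat n n (\<lambda>(i,j). if i = j then (\<Sum>k\<in>{0..<n} - {i}. A $$ (i,k)) else - A $$ (i,j))"

definition alpha :: "nat \<Rightarrow> real mat \<Rightarrow> nat \<Rightarrow> real" where
  "alpha n A i = (-1) ^ (i + i) * det (mat_delete (calL_matrix n A) i i)"

text \<open>Irreducibility of an n x n matrix: no nonempty proper index subset S with M_ij = 0
  for all i in S, j not in S (i.e. it cannot be permuted to block triangular form).\<close>
definition irreducible_mat :: "nat \<Rightarrow> real mat \<Rightarrow> bool" where
  "irreducible_mat n M \<longleftrightarrow>
     (\<forall>S. S \<subseteq> {0..<n} \<and> S \<noteq> {} \<and> S \<noteq> {0..<n} \<longrightarrow>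
        (\<exists>i\<in>S. \<exists>j\<in>{0..<n} - S. M $$ (i,j) \<noteq> 0))"

text \<open>Digraph G associated with A: arc (i,j) iff i \<noteq> j and a_ji > 0, with weight a_ji.\<close>
definition arc :: "nat \<Rightarrow> real mat \<Rightarrow> nat \<Rightarrow> nat \<Rightarrow> bool" where
  "arc n A i j \<longleftrightarrow> i < n \<and> j < n \<and> i \<noteq> j \<and> A $$ (j,i) > 0"

definition is_cycle :: "nat \<Rightarrow> real mat \<Rightarrow> nat list \<Rightarrow> bool" where
  "is_cycle n A cs \<longleftrightarrow> length cs \<ge> 2 \<and> distinct cs \<and>
     (\<forall>m < length cs. arc n A (cs ! m) (cs ! ((m + 1) mod length cs)))"

definition cycle_weight :: "real mat \<Rightarrow> nat list \<Rightarrow> real" where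
  "cycle_weight A cs = (\<Prod>m<length cs. A $$ (cs ! ((m + 1) mod length cs), cs ! m))"

definition cycle_balanced :: "nat \<Rightarrow> real mat \<Rightarrow> bool" where
  "cycle_balanced n A \<longleftrightarrow>
     (\<forall>cs. is_cycle n A cs \<longrightarrow> is_cycle n A (rev cs) \<and> cycle_weight A (rev cs) = cycle_weight A cs)"

definition spectral_bound :: "real mat \<Rightarrow> real" where
  "spectral_bound M = Max (Re ` {z. eigenvalue (map_mat complex_of_real M) z})"

definition lambda1 :: "nat \<Rightarrow> real mat \<Rightarrow> real \<Rightarrow> (nat \<Rightarrow> real) \<Rightarrow> real" where
  "lambda1 n A \<mu> h = - spectral_bound
      (mat n n (\<lambda>(i,j). \<mu> * conn_matrix n A $$ (i,j) + (if i = j then h i else 0)))"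

text \<open>w is a positive equilibrium of w_i' = \<mu> \<Sum>_j L_ij w_j + w_i (r_i - w_i).\<close>
definition pos_equilibrium :: "nat \<Rightarrow> real mat \<Rightarrow> real \<Rightarrow> (nat \<Rightarrow> real) \<Rightarrow> (nat \<Rightarrow> real) \<Rightarrow> bool" where
  "pos_equilibrium n A \<mu> r w \<longleftrightarrow>
     (\<forall>i<n. w i > 0) \<and>
     (\<forall>i<n. \<mu> * (\<Sum>j<n. conn_matrix n A $$ (i,j) * w j) + w i * (r i - w i) = 0)"

end

theory Submission
  imports Defs
begin

definition bl :: "nat \<Rightarrow> (nat \<Rightarrow> nat \<Rightarrow> real) \<Rightarrow> (nat \<Rightarrow> real) \<Rightarrow> (nat \<Rightarrow> real) \<Rightarrow> real" where
  "bl n S a b = (\<Sum>i<n. \<Sum>j<n. a i * S i j * b j)"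

definition nrm :: "nat \<Rightarrow> (nat \<Rightarrow> real) \<Rightarrow> real" where
  "nrm n y = (\<Sum>i<n. (y i)^2)"

lemma bl_sym:
  assumes "\<forall>i<n. \<forall>j<n. S i j = S j i"
  shows "bl n S a b = bl n S b a"
proof -
  have "bl n S a b = (\<Sum>j<n. \<Sum>i<n. a i * S i j * b j)" unfolding bl_def by (rule sum.swap)
  also have "\<dots> = bl n S b a" unfolding bl_def
    by (intro sum.cong refl) (use assms in \<open>auto simp: mult.commute mult.left_commute\<close>)
  finally show ?thesis .
qed

lemma bl_expand:
  assumes "\<forall>i<n. \<forall>j<n. S i j = S j i"
  shows "bl n S (\<lambda>i. a i + s * b i) (\<lambda>i. a i + s * b i)
       = bl n S a a + 2 * s * bl n S a b + s^2 * bl n S b b"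
proof -
  have "bl n S (\<lambda>i. a i + s * b i) (\<lambda>i. a i + s * b i)
      = bl n S a a + s * bl n S a b + s * bl n S b a + s^2 * bl n S b b"
    unfolding bl_def
    by (simp add: algebra_simps sum.distrib sum_distrib_left power2_eq_square)
  then show ?thesis using bl_sym[OF assms, of a b] by simp
qed

lemma bl_cs:
  assumes sym: "\<forall>i<n. \<forall>j<n. S i j = S j i" and psd: "\<forall>y. bl n S y y \<ge> 0"
  shows "(bl n S a b)^2 \<le> bl n S a a * bl n S b b"
proof (cases "bl n S b b = 0")
  case True
  have "bl n S a b = 0"
  proof (rule ccontr)
    assume ne: "bl n S a b \<noteq> 0"
    define s where "s = - (bl n S a a + 1) / (2 * bl n S a b)"
    have "0 \<le> bl n S (\<lambda>i. a i + s * b i) (\<lambda>i. a i + s * b i)" using psd by blast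
    also have "\<dots> = bl n S a a + 2 * s * bl n S a b" using bl_expand[OF sym] True by simp
    also have "\<dots> = -1" using ne unfolding s_def by (simp add: field_simps)
    finally show False by simp
  qed
  then show ?thesis using True by simp
next
  case False
  then have pos: "bl n S b b > 0" using psd by (metis less_eq_real_def)
  define s where "s = - bl n S a b / bl n S b b"
  have "0 \<le> bl n S (\<lambda>i. a i + s * b i) (\<lambda>i. a i + s * b i)" using psd by blast
  also have "\<dots> = bl n S a a + 2 * s * bl n S a b + s^2 * bl n S b b" using bl_expand[OF sym] by simp
  also have "\<dots> = bl n S a a - (bl n S a b)^2 / bl n S b b"
    using pos unfolding s_def by (simp add: field_simps power2_eq_square)
  finally have "(bl n S a b)^2 / bl n S b b \<le> bl n S a a" by simp
  then show ?thesis using pos by (simp add: field_simps)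
qed

lemma abs_prod_le_nrm:
  assumes "i < n" "j < n"
  shows "\<bar>y i * y j\<bar> \<le> nrm n y"
proof -
  have a: "(y i)^2 \<le> nrm n y" unfolding nrm_def
    using assms by (intro member_le_sum) auto
  have b: "(y j)^2 \<le> nrm n y" unfolding nrm_def
    using assms by (intro member_le_sum) auto
  have "2 * \<bar>y i * y j\<bar> \<le> (y i)^2 + (y j)^2"
  proof -
    have "0 \<le> (\<bar>y i\<bar> - \<bar>y j\<bar>)^2" by simp
    then show ?thesis by (simp add: abs_mult power2_diff power2_abs)
  qed
  then show ?thesis using a b by linarith
qed

lemma bl_bound:
  "bl n S y y \<le> (\<Sum>i<n. \<Sum>j<n. \<bar>S i j\<bar>) * nrm n y"
proof -
  have "bl n S y y \<le> (\<Sum>i<n. \<Sum>j<n. \<bar>S i j\<bar> * nrm n y)"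
    unfolding bl_def
  proof (intro sum_mono)
    fix i j assume "i \<in> {..<n}" "j \<in> {..<n}"
    then have "\<bar>y i * y j\<bar> \<le> nrm n y" by (intro abs_prod_le_nrm) auto
    then have "\<bar>S i j\<bar> * \<bar>y i * y j\<bar> \<le> \<bar>S i j\<bar> * nrm n y" by (intro mult_left_mono) auto
    moreover have "y i * S i j * y j \<le> \<bar>S i j\<bar> * \<bar>y i * y j\<bar>"
      by (metis abs_ge_self abs_mult mult.commute mult.left_commute)
    ultimately show "y i * S i j * y j \<le> \<bar>S i j\<bar> * nrm n y" by linarith
  qed
  also have "\<dots> = (\<Sum>i<n. \<Sum>j<n. \<bar>S i j\<bar>) * nrm n y"
    by (simp add: sum_distrib_right)
  finally show ?thesis .
qed

lemma sum_delta_mult: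
  "(\<Sum>j<(n::nat). (if i = j then t else 0) * (f j :: real)) = (if i < n then t * f i else 0)"
proof -
  have "(\<Sum>j<n. (if i = j then t else 0) * f j) = (\<Sum>j<n. (if i = j then t * f i else 0))"
    by (intro sum.cong) auto
  then show ?thesis by (simp add: sum.delta')
qed

lemma sum_delta_mult':
  "(\<Sum>j<(n::nat). a j * ((if i = j then t else 0) * (f j :: real))) = (if i < n then a i * t * f i else 0)"
proof -
  have "(\<Sum>j<n. a j * ((if i = j then t else 0) * f j)) = (\<Sum>j<n. (if i = j then a i * t * f i else 0))"
    by (intro sum.cong) auto
  then show ?thesis by (simp add: sum.delta')
qed

lemma bl_diag_minus:
  "bl n (\<lambda>i j. (if i = j then t else 0) - S i j) a b = t * (\<Sum>i<n. a i * b i) - bl n S a b"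
proof -
  have "bl n (\<lambda>i j. (if i = j then t else 0) - S i j) a b
     = (\<Sum>i<n. \<Sum>j<n. a i * ((if i = j then t else 0) * b j)) - bl n S a b"
    unfolding bl_def by (simp add: right_diff_distrib left_diff_distrib sum_subtractf mult.assoc)
  also have "(\<Sum>i<n. \<Sum>j<n. a i * ((if i = j then t else 0) * b j)) = t * (\<Sum>i<n. a i * b i)"
  proof -
    have "(\<Sum>i<n. \<Sum>j<n. a i * ((if i = j then t else 0) * b j)) = (\<Sum>i<n. a i * t * b i)"
      by (intro sum.cong refl) (simp add: sum_delta_mult')
    also have "\<dots> = t * (\<Sum>i<n. a i * b i)" by (simp add: sum_distrib_left mult_ac)
    finally show ?thesis .
  qed
  finally show ?thesis .
qed

lemma nrm_zero: assumes "nrm n y = 0" "i < n" shows "y i = 0"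
proof -
  have "(y i)^2 \<le> nrm n y" unfolding nrm_def using assms by (intro member_le_sum) auto
  then show ?thesis using assms by simp
qed

lemma nrm_nonneg: "nrm n y \<ge> 0" unfolding nrm_def by (intro sum_nonneg) auto

lemma bl_zero: assumes "nrm n y = 0" shows "bl n S y y = 0"
  unfolding bl_def using nrm_zero[OF assms] by simp

lemma inverse_exists:
  fixes Q :: "nat \<Rightarrow> nat \<Rightarrow> real"
  assumes "\<not> (\<exists>w. (\<exists>i<n. w i \<noteq> 0) \<and> (\<forall>i<n. (\<Sum>j<n. Q i j * w j) = 0))"
  shows "\<exists>R. \<forall>i<n. \<forall>j<n. (\<Sum>k<n. Q i k * R k j) = (if i = j then 1 else 0)"
proof -
  define Qm where "Qm = mat n n (\<lambda>(i,j). Q i j)"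
  have Qc: "Qm \<in> carrier_mat n n" unfolding Qm_def by simp
  have "det Qm \<noteq> 0"
  proof
    assume "det Qm = 0"
    then obtain v where v: "v \<in> carrier_vec n" "v \<noteq> 0\<^sub>v n" "Qm *\<^sub>v v = 0\<^sub>v n"
      using det_0_iff_vec_prod_zero[OF Qc] by blast
    have "\<exists>i<n. v $ i \<noteq> 0" using v by (auto simp: vec_eq_iff)
    moreover have "\<forall>i<n. (\<Sum>j<n. Q i j * v $ j) = 0"
    proof (intro allI impI)
      fix i assume i: "i < n"
      have "(Qm *\<^sub>v v) $ i = 0" using v i by simp
      then show "(\<Sum>j<n. Q i j * v $ j) = 0" using i v
        by (simp add: Qm_def scalar_prod_def lessThan_atLeast0)
    qed
    ultimately show False using assms by blast
  qed
  from det_non_zero_imp_unit[OF Qc this, of "()"]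
  obtain B where B: "B \<in> carrier_mat n n" "Qm * B = 1\<^sub>m n"
    unfolding Units_def ring_mat_def by auto
  show ?thesis
  proof (intro exI allI impI)
    fix i j assume ij: "i < n" "j < n"
    have "(Qm * B) $$ (i,j) = (if i = j then 1 else 0)" using B ij by simp
    then show "(\<Sum>k<n. Q i k * B $$ (k,j)) = (if i = j then 1 else 0)"
      using B ij by (simp add: Qm_def scalar_prod_def lessThan_atLeast0)
  qed
qed

lemma sym_eig:
  assumes sym: "\<forall>i<n. \<forall>j<n. S i j = S j i" and x: "nrm n x > 0"
  shows "\<exists>t w. bl n S x x \<le> t * nrm n x \<and> (\<exists>i<n. w i \<noteq> 0) \<and>
     (\<forall>i<n. (\<Sum>j<n. S i j * w j) = t * w i)"
proof -
  define T where "T = {t. \<forall>y. bl n S y y \<le> t * nrm n y}"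
  have KT: "(\<Sum>i<n. \<Sum>j<n. \<bar>S i j\<bar>) \<in> T" unfolding T_def using bl_bound by blast
  then have Tne: "T \<noteq> {}" by blast
  have low: "\<And>y t. t \<in> T \<Longrightarrow> nrm n y > 0 \<Longrightarrow> bl n S y y / nrm n y \<le> t"
    unfolding T_def by (auto simp: pos_divide_le_eq)
  have bdd: "bdd_below T" using low[OF _ x] by (auto simp: bdd_below_def)
  define t0 where "t0 = Inf T"
  have t0T: "t0 \<in> T"
    unfolding T_def mem_Collect_eq
  proof
    fix y
    show "bl n S y y \<le> t0 * nrm n y"
    proof (cases "nrm n y = 0")
      case True then show ?thesis using bl_zero by simp
    next
      case False
      then have p: "nrm n y > 0" using nrm_nonneg[of n y] by simp
      have "bl n S y y / nrm n y \<le> t0" unfolding t0_def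
      proof (rule cInf_greatest[OF Tne])
        fix t assume "t \<in> T"
        then show "bl n S y y / nrm n y \<le> t" using low p by blast
      qed
      then show ?thesis using p by (simp add: pos_divide_le_eq)
    qed
  qed
  have ray: "bl n S x x \<le> t0 * nrm n x" using t0T unfolding T_def by blast
  define Q where "Q = (\<lambda>i j. (if i = j then t0 else 0) - S i j)"
  have Qsym: "\<forall>i<n. \<forall>j<n. Q i j = Q j i" using sym unfolding Q_def by auto
  have blQ: "\<And>a b. bl n Q a b = t0 * (\<Sum>i<n. a i * b i) - bl n S a b"
    unfolding Q_def by (rule bl_diag_minus)
  have Qpsd: "\<forall>y. bl n Q y y \<ge> 0"
  proof
    fix y
    have "bl n S y y \<le> t0 * nrm n y" using t0T unfolding T_def by blast
    moreover have ss: "(\<Sum>i<n. y i * y i) = nrm n y" unfolding nrm_def by (simp add: power2_eq_square)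
    ultimately show "bl n Q y y \<ge> 0" using blQ[of y y] by simp
  qed
  show ?thesis
  proof (cases "\<exists>w. (\<exists>i<n. w i \<noteq> 0) \<and> (\<forall>i<n. (\<Sum>j<n. Q i j * w j) = 0)")
    case True
    then obtain w where w: "\<exists>i<n. w i \<noteq> 0" "\<forall>i<n. (\<Sum>j<n. Q i j * w j) = 0" by blast
    have "\<forall>i<n. (\<Sum>j<n. S i j * w j) = t0 * w i"
    proof (intro allI impI)
      fix i assume i: "i < n"
      have "(\<Sum>j<n. Q i j * w j) = t0 * w i - (\<Sum>j<n. S i j * w j)"
        unfolding Q_def using i
        by (simp add: left_diff_distrib sum_subtractf sum_delta_mult)
      then show "(\<Sum>j<n. S i j * w j) = t0 * w i" using w(2) i by simp
    qed
    then show ?thesis using ray w(1) by blast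
  next
    case False
    from inverse_exists[OF this] obtain R where
      R: "\<forall>i<n. \<forall>j<n. (\<Sum>k<n. Q i k * R k j) = (if i = j then 1 else 0)" by blast
    define KR where "KR = (\<Sum>i<n. \<Sum>j<n. \<bar>R i j\<bar>)"
    have KR0: "KR \<ge> 0" unfolding KR_def by (intro sum_nonneg) auto
    have key: "nrm n y \<le> (KR + 1) * bl n Q y y" for y
    proof (cases "nrm n y = 0")
      case True then show ?thesis using Qpsd KR0 by simp
    next
      case False
      then have p: "nrm n y > 0" using nrm_nonneg[of n y] by simp
      define z where "z = (\<lambda>i. \<Sum>j<n. R i j * y j)"
      have Qz: "(\<Sum>k<n. Q i k * z k) = y i" if i: "i < n" for i
      proof -
        have "(\<Sum>k<n. Q i k * z k) = (\<Sum>k<n. \<Sum>j<n. Q i k * R k j * y j)"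
          unfolding z_def by (simp add: sum_distrib_left mult.assoc)
        also have "\<dots> = (\<Sum>j<n. \<Sum>k<n. Q i k * R k j * y j)" by (rule sum.swap)
        also have "\<dots> = (\<Sum>j<n. (\<Sum>k<n. Q i k * R k j) * y j)"
          by (simp add: sum_distrib_right)
        also have "\<dots> = (\<Sum>j<n. (if i = j then y j else 0))"
          using R i by (intro sum.cong) auto
        also have "\<dots> = y i" using i by simp
        finally show ?thesis .
      qed
      have e1: "nrm n y = bl n Q y z"
        unfolding nrm_def bl_def
        by (intro sum.cong refl) (simp add: Qz power2_eq_square mult.assoc flip: sum_distrib_left)
      have e2: "bl n Q z z = bl n R y y"
      proof -
        have "bl n Q z z = (\<Sum>i<n. z i * y i)"
          unfolding bl_def
          by (intro sum.cong refl) (simp add: Qz mult.assoc flip: sum_distrib_left)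
        also have "\<dots> = bl n R y y" unfolding bl_def z_def
          by (intro sum.cong refl) (simp add: sum_distrib_left mult_ac)
        finally show ?thesis .
      qed
      have b1: "bl n Q z z \<le> KR * nrm n y" using e2 bl_bound[of n R y] unfolding KR_def by simp
      have b2: "bl n Q y y \<ge> 0" using Qpsd by blast
      have "(nrm n y)^2 \<le> bl n Q y y * bl n Q z z" using bl_cs[OF Qsym Qpsd, of y z] e1 by simp
      also have "\<dots> \<le> bl n Q y y * (KR * nrm n y)" using b1 b2 by (rule mult_left_mono)
      finally have "nrm n y * nrm n y \<le> (KR * bl n Q y y) * nrm n y"
        by (simp only: power2_eq_square mult_ac)
      then have "nrm n y \<le> KR * bl n Q y y" using p by (rule mult_right_le_imp_le)
      moreover have "(KR + 1) * bl n Q y y = KR * bl n Q y y + bl n Q y y" by (simp add: algebra_simps)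
      ultimately show ?thesis using Qpsd[rule_format, of y] by linarith
    qed
    define e where "e = 1 / (KR + 1)"
    have e0: "e > 0" unfolding e_def using KR0 by simp
    have "t0 - e \<in> T" unfolding T_def mem_Collect_eq
    proof
      fix y
      have "nrm n y \<le> (KR + 1) * bl n Q y y" by (rule key)
      then have "e * nrm n y \<le> bl n Q y y" unfolding e_def using KR0
        by (simp add: field_simps)
      moreover have ss: "(\<Sum>i<n. y i * y i) = nrm n y" unfolding nrm_def by (simp add: power2_eq_square)
      ultimately show "bl n S y y \<le> (t0 - e) * nrm n y" using blQ[of y y] by (simp add: left_diff_distrib)
    qed
    then have "t0 \<le> t0 - e" unfolding t0_def by (rule cInf_lower[OF _ bdd])
    then show ?thesis using e0 by simp
  qed
qed

lemma sb_ge: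
  fixes M :: "real mat" and w :: "nat \<Rightarrow> real"
  assumes M: "M \<in> carrier_mat n n" and w0: "\<exists>i<n. w i \<noteq> 0"
    and ev: "\<forall>i<n. (\<Sum>j<n. M $$ (i,j) * w j) = t * w i"
  shows "t \<le> spectral_bound M"
proof -
  define Mc where "Mc = map_mat complex_of_real M"
  have Mc: "Mc \<in> carrier_mat n n" unfolding Mc_def using M by simp
  define v where "v = vec n (\<lambda>i. complex_of_real (w i))"
  have "eigenvector Mc v (complex_of_real t)"
    unfolding eigenvector_def
  proof (intro conjI)
    show "v \<in> carrier_vec (dim_row Mc)" using Mc unfolding v_def by simp
    show "v \<noteq> 0\<^sub>v (dim_row Mc)" using Mc w0 unfolding v_def by (auto simp: vec_eq_iff)
    show "Mc *\<^sub>v v = complex_of_real t \<cdot>\<^sub>v v"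
    proof (rule eq_vecI)
      fix i assume "i < dim_vec (complex_of_real t \<cdot>\<^sub>v v)"
      then have i: "i < n" unfolding v_def by simp
      have "(Mc *\<^sub>v v) $ i = (\<Sum>j = 0..<n. complex_of_real (M $$ (i,j)) * complex_of_real (w j))"
        using i M unfolding Mc_def v_def by (simp add: scalar_prod_def)
      also have "\<dots> = complex_of_real (\<Sum>j<n. M $$ (i,j) * w j)" by (simp add: lessThan_atLeast0)
      also have "\<dots> = complex_of_real (t * w i)" using ev i by simp
      also have "\<dots> = (complex_of_real t \<cdot>\<^sub>v v) $ i" using i unfolding v_def by simp
      finally show "(Mc *\<^sub>v v) $ i = (complex_of_real t \<cdot>\<^sub>v v) $ i" .
    qed (use Mc in \<open>simp add: v_def\<close>)
  qed
  then have evt: "eigenvalue Mc (complex_of_real t)" unfolding eigenvalue_def by blast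
  have "char_poly Mc \<noteq> 0"
    using degree_monic_char_poly[OF Mc] by auto
  then have "finite {z. poly (char_poly Mc) z = 0}" by (rule poly_roots_finite)
  moreover have "{z. eigenvalue Mc z} = {z. poly (char_poly Mc) z = 0}"
    using eigenvalue_root_char_poly[OF Mc] by auto
  ultimately have fin: "finite {z. eigenvalue Mc z}" by simp
  have "Re (complex_of_real t) \<le> Max (Re ` {z. eigenvalue Mc z})"
  proof (rule Max_ge)
    show "finite (Re ` {z. eigenvalue Mc z})" using fin by simp
    show "Re (complex_of_real t) \<in> Re ` {z. eigenvalue Mc z}" using evt by blast
  qed
  then show ?thesis unfolding spectral_bound_def Mc_def by simp
qed

fun wlk :: "nat \<Rightarrow> real mat \<Rightarrow> nat list \<Rightarrow> bool" where
  "wlk n A [] = True"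
| "wlk n A [x] = (x < n)"
| "wlk n A (x # y # ys) = (arc n A x y \<and> wlk n A (y # ys))"

fun pr :: "(nat \<Rightarrow> nat \<Rightarrow> real) \<Rightarrow> nat list \<Rightarrow> real" where
  "pr f (x # y # ys) = f x y * pr f (y # ys)"
| "pr f _ = 1"

lemma wlk_hd: "wlk n A (x # ys) \<Longrightarrow> x < n"
  by (cases ys) (auto simp: arc_def)

lemma wlk_app: "wlk n A (xs @ y # ys) = (wlk n A (xs @ [y]) \<and> wlk n A (y # ys))"
proof (induction xs)
  case Nil
  then show ?case by (auto dest: wlk_hd)
next
  case (Cons x xs)
  then show ?case by (cases xs) (auto dest: wlk_hd simp: arc_def)
qed

lemma pr_app: "pr f (xs @ y # ys) = pr f (xs @ [y]) * pr f (y # ys)"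
proof (induction xs)
  case Nil
  then show ?case by simp
next
  case (Cons x xs)
  then show ?case by (cases xs) auto
qed

lemma pr_Cons: "xs \<noteq> [] \<Longrightarrow> pr f (x # xs) = f x (hd xs) * pr f xs"
  by (cases xs) auto

lemma pr_snoc: "ys \<noteq> [] \<Longrightarrow> pr f (ys @ [x]) = pr f ys * f (last ys) x"
proof (induction ys)
  case Nil
  then show ?case by simp
next
  case (Cons y ys)
  then show ?case by (cases ys) auto
qed

lemma pr_rev: "pr f (rev xs) = pr (\<lambda>x y. f y x) xs"
proof (induction xs)
  case Nil
  then show ?case by simp
next
  case (Cons x xs)
  show ?case
  proof (cases "xs = []")
    case True then show ?thesis by simp
  next
    case False
    have "pr f (rev (x # xs)) = pr f (rev xs @ [x])" by simp
    also have "\<dots> = pr f (rev xs) * f (last (rev xs)) x" using False by (simp add: pr_snoc)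
    also have "\<dots> = pr (\<lambda>x y. f y x) xs * f (hd xs) x" using Cons False by (simp add: last_rev)
    also have "\<dots> = pr (\<lambda>x y. f y x) (x # xs)" using False by (simp add: pr_Cons)
    finally show ?thesis .
  qed
qed

lemma pr_div: "pr (\<lambda>x y. f x y / g x y) xs = pr f xs / pr g xs"
  by (induction xs rule: induct_list012) auto

lemma pr_one: "pr (\<lambda>x y. 1) xs = 1"
  by (induction xs rule: induct_list012) auto

lemma wlk_nth: "wlk n A w \<Longrightarrow> m + 1 < length w \<Longrightarrow> arc n A (w ! m) (w ! (m + 1))"
proof (induction w arbitrary: m rule: induct_list012)
  case (3 x y zs)
  then show ?case by (cases m) auto
qed auto

lemma pr_nth: "pr f xs = (\<Prod>m<length xs - 1. f (xs ! m) (xs ! (m + 1)))"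
proof (induction xs rule: induct_list012)
  case (3 x y zs)
  have "pr f (x # y # zs) = f x y * pr f (y # zs)" by simp
  also have "\<dots> = f x y * (\<Prod>m<length zs. f ((y # zs) ! m) ((y # zs) ! (m + 1)))"
    using 3 by simp
  also have "\<dots> = (\<Prod>m<Suc (length zs). f ((x # y # zs) ! m) ((x # y # zs) ! (m + 1)))"
    by (subst prod.lessThan_Suc_shift) simp
  finally show ?case by simp
qed auto

lemma pr_app2: "xs \<noteq> [] \<Longrightarrow> ys \<noteq> [] \<Longrightarrow> pr f (xs @ ys) = pr f xs * f (last xs) (hd ys) * pr f ys"
proof -
  assume xs: "xs \<noteq> []" and ys: "ys \<noteq> []"
  obtain y ys' where y: "ys = y # ys'" using ys by (cases ys) auto
  have "pr f (xs @ ys) = pr f (xs @ [y]) * pr f (y # ys')" unfolding y by (rule pr_app)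
  then show ?thesis using xs y by (simp add: pr_snoc)
qed

lemma wlk_app2: "xs \<noteq> [] \<Longrightarrow> ys \<noteq> [] \<Longrightarrow> wlk n A (xs @ ys) = (wlk n A xs \<and> wlk n A ys \<and> arc n A (last xs) (hd ys))"
proof -
  assume xs: "xs \<noteq> []" and ys: "ys \<noteq> []"
  obtain y ys' where y: "ys = y # ys'" using ys by (cases ys) auto
  obtain xs' l where l: "xs = xs' @ [l]" using xs by (cases xs rule: rev_cases) auto
  have "wlk n A (xs @ ys) = (wlk n A (xs' @ [l, y]) \<and> wlk n A (y # ys'))"
    unfolding y l using wlk_app[of n A "xs' @ [l]" y ys'] by simp
  also have "wlk n A (xs' @ [l, y]) = (wlk n A (xs' @ [l]) \<and> wlk n A [l, y])"
    using wlk_app[of n A xs' l "[y]"] by simp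
  finally show ?thesis unfolding y l by (auto simp: arc_def dest: wlk_hd)
qed

lemma wlk_rev:
  assumes sym: "\<And>x y. arc n A x y \<Longrightarrow> arc n A y x"
  shows "wlk n A w \<Longrightarrow> wlk n A (rev w)"
proof (induction w rule: induct_list012)
  case (3 x y zs)
  have "wlk n A (rev (y # zs) @ [x])"
    using 3 sym by (subst wlk_app2) (auto simp: arc_def)
  then show ?case by simp
qed auto

lemma wlk_set: "wlk n A w \<Longrightarrow> x \<in> set w \<Longrightarrow> x < n"
  by (induction w rule: induct_list012) (auto simp: arc_def)

lemma nth_close:
  assumes "cs \<noteq> []" "m < length cs"
  shows "(cs @ [hd cs]) ! (m + 1) = cs ! ((m + 1) mod length cs)"
proof (cases "m + 1 < length cs")
  case True then show ?thesis by (simp add: nth_append)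
next
  case False
  then have "m + 1 = length cs" using assms by simp
  then show ?thesis using assms by (simp add: nth_append hd_conv_nth)
qed

lemma cw: "cs \<noteq> [] \<Longrightarrow> cycle_weight A cs = pr (\<lambda>x y. A $$ (y,x)) (cs @ [hd cs])"
  unfolding cycle_weight_def pr_nth
proof (intro prod.cong)
  fix m assume cs: "cs \<noteq> []" and "m \<in> {..<length (cs @ [hd cs]) - 1}"
  then have m: "m < length cs" by simp
  have a: "(cs @ [hd cs]) ! m = cs ! m" using m by (simp add: nth_append)
  have b: "(cs @ [hd cs]) ! (m + 1) = cs ! ((m + 1) mod length cs)" using cs m by (rule nth_close)
  show "A $$ (cs ! ((m + 1) mod length cs), cs ! m) = A $$ ((cs @ [hd cs]) ! (m + 1), (cs @ [hd cs]) ! m)"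
    unfolding a b ..
qed simp

lemma cw_rev:
  assumes "length cs \<ge> 2"
  shows "cycle_weight A (rev cs) = pr (\<lambda>x y. A $$ (x,y)) (cs @ [hd cs])"
proof -
  obtain h cs1 where c1: "cs = h # cs1" using assms by (cases cs) auto
  obtain mid l where c2: "cs1 = mid @ [l]" using assms c1 by (cases cs1 rule: rev_cases) auto
  define g where "g = (\<lambda>x y. A $$ (y,x))"
  have "cycle_weight A (rev cs) = pr g (rev cs @ [hd (rev cs)])"
    unfolding g_def using assms by (intro cw) auto
  also have "rev cs @ [hd (rev cs)] = (l # rev mid @ [h]) @ [l]" unfolding c1 c2 by simp
  also have "pr g \<dots> = pr g (l # rev mid @ [h]) * g h l"
    by (subst pr_snoc) auto
  also have "\<dots> = pr g (h # l # rev mid @ [h])" by simp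
  also have "h # l # rev mid @ [h] = rev (cs @ [hd cs])" unfolding c1 c2 by simp
  also have "pr g \<dots> = pr (\<lambda>x y. A $$ (x,y)) (cs @ [hd cs])"
    unfolding pr_rev g_def by simp
  finally show ?thesis .
qed

lemma pr_pos_gen: "wlk n A w \<Longrightarrow> (\<And>x y. arc n A x y \<Longrightarrow> f x y > 0) \<Longrightarrow> pr f w > 0"
  by (induction w rule: induct_list012) auto

locale gsetting =
  fixes n :: nat and A :: "real mat"
  assumes n2: "n \<ge> 2"
  and nonneg: "\<forall>i<n. \<forall>j<n. i \<noteq> j \<longrightarrow> A $$ (i,j) \<ge> 0"
  and irr: "irreducible_mat n (conn_matrix n A)"
  and cb: "cycle_balanced n A"
begin

lemma irr':
  assumes "S \<subseteq> {0..<n}" "S \<noteq> {}" "S \<noteq> {0..<n}"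
  shows "\<exists>i\<in>S. \<exists>j\<in>{0..<n} - S. i \<noteq> j \<and> A $$ (i,j) > 0"
proof -
  obtain i j where ij: "i \<in> S" "j \<in> {0..<n} - S" "conn_matrix n A $$ (i,j) \<noteq> 0"
    using irr assms unfolding irreducible_mat_def by blast
  have ne: "i \<noteq> j" using ij by auto
  have "i < n" "j < n" using ij assms by auto
  then have "A $$ (i,j) \<noteq> 0" using ij ne unfolding conn_matrix_def by simp
  moreover have "A $$ (i,j) \<ge> 0" using nonneg \<open>i < n\<close> \<open>j < n\<close> ne by blast
  ultimately show ?thesis using ij ne by force
qed

lemma reach:
  assumes "x < n" "y < n"
  shows "\<exists>w. wlk n A w \<and> w \<noteq> [] \<and> hd w = x \<and> last w = y"
proof -
  define S where "S = {x\<in>{0..<n}. \<exists>w. wlk n A w \<and> w \<noteq> [] \<and> hd w = x \<and> last w = y}"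
  have yS: "y \<in> S" unfolding S_def using assms by (intro CollectI conjI exI[of _ "[y]"]) auto
  have "S = {0..<n}"
  proof (rule ccontr)
    assume ne: "S \<noteq> {0..<n}"
    have sub: "S \<subseteq> {0..<n}" unfolding S_def by auto
    obtain i j where ij: "i \<in> S" "j \<in> {0..<n} - S" "i \<noteq> j" "A $$ (i,j) > 0"
      using irr'[OF sub _ ne] yS by blast
    obtain w where w: "wlk n A w" "w \<noteq> []" "hd w = i" "last w = y" using ij(1) unfolding S_def by blast
    obtain w' where w': "w = i # w'" using w by (cases w) auto
    have "arc n A j i" unfolding arc_def using ij sub by auto
    then have "wlk n A (j # w)" using w w' by simp
    then have "j \<in> S" unfolding S_def using ij w by (intro CollectI conjI exI[of _ "j # w"]) auto
    then show False using ij by blast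
  qed
  then show ?thesis using assms unfolding S_def by auto
qed

lemma simple:
  "wlk n A w \<Longrightarrow> w \<noteq> [] \<Longrightarrow> \<exists>w'. wlk n A w' \<and> distinct w' \<and> w' \<noteq> [] \<and> hd w' = hd w \<and> last w' = last w"
proof (induction "length w" arbitrary: w rule: less_induct)
  case less
  show ?case
  proof (cases "distinct w")
    case True then show ?thesis using less by blast
  next
    case False
    then obtain xs y ys zs where d: "w = xs @ [y] @ ys @ [y] @ zs"
      using not_distinct_decomp by blast
    define w2 where "w2 = xs @ [y] @ zs"
    have l: "length w2 < length w" unfolding w2_def d by simp
    have "wlk n A (xs @ [y])" "wlk n A ((y # ys) @ y # zs)"
      using less(2) wlk_app[of n A xs y "ys @ y # zs"] unfolding d by auto
    then have "wlk n A (xs @ [y])" "wlk n A (y # zs)" using wlk_app[of n A "y # ys" y zs] by auto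
    then have "wlk n A w2" unfolding w2_def using wlk_app[of n A xs y zs] by simp
    moreover have "hd w2 = hd w" unfolding w2_def d by (cases xs) auto
    moreover have "last w2 = last w" unfolding w2_def d by (cases zs rule: rev_cases) auto
    moreover have "w2 \<noteq> []" unfolding w2_def by simp
    ultimately show ?thesis using less(1)[OF l] by metis
  qed
qed

lemma arc_sym:
  assumes a: "arc n A x y"
  shows "arc n A y x"
proof -
  have xy: "x < n" "y < n" "x \<noteq> y" using a unfolding arc_def by auto
  obtain w where w: "wlk n A w" "w \<noteq> []" "hd w = y" "last w = x" using reach xy by blast
  obtain p where p: "wlk n A p" "distinct p" "p \<noteq> []" "hd p = hd w" "last p = last w"
    using simple[OF w(1,2)] by blast
  have p4: "hd p = y" "last p = x" using p(4,5) w(3,4) by simp_all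
  define k where "k = length p"
  have k2: "k \<ge> 2"
  proof (rule ccontr)
    assume "\<not> k \<ge> 2"
    moreover have "k > 0" using p(3) unfolding k_def by simp
    ultimately have "k = 1" by linarith
    then have "length p = 1" unfolding k_def .
    then obtain z where "p = [z]" by (cases p) auto
    then show False using p4 xy by simp
  qed
  have p0: "p ! 0 = y" using p p4 by (simp add: hd_conv_nth)
  have pk: "p ! (k - 1) = x" using p p4 unfolding k_def by (simp add: last_conv_nth)
  have "is_cycle n A p"
    unfolding is_cycle_def
  proof (intro conjI allI impI)
    show "2 \<le> length p" using k2 k_def by simp
    show "distinct p" by fact
    fix m assume m: "m < length p"
    show "arc n A (p ! m) (p ! ((m + 1) mod length p))"
    proof (cases "m + 1 < length p")
      case True then show ?thesis using wlk_nth[OF p(1) True] by simp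
    next
      case False
      then have mk: "m = length p - 1" using m by simp
      have "m + 1 = length p" using mk k2 unfolding k_def by linarith
      then have "(m + 1) mod length p = 0" by simp
      moreover have "p ! m = x" using pk mk unfolding k_def by simp
      ultimately show ?thesis using a p0 by simp
    qed
  qed
  then have "is_cycle n A (rev p)" using cb unfolding cycle_balanced_def by blast
  moreover have km: "k - 1 < length (rev p)" using k2 unfolding k_def by simp
  ultimately have "arc n A (rev p ! (k - 1)) (rev p ! ((k - 1 + 1) mod length (rev p)))"
    unfolding is_cycle_def by blast
  then have "arc n A (rev p ! (k - 1)) (rev p ! ((k - 1 + 1) mod k))" unfolding k_def by simp
  moreover have "k - 1 + 1 = k" using k2 by linarith
  ultimately have "arc n A (rev p ! (k - 1)) (rev p ! 0)" by simp
  moreover have "rev p ! (k - 1) = y" using p0 k2 unfolding k_def by (simp add: rev_nth)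
  moreover have "rev p ! 0 = x" using pk k2 unfolding k_def by (subst rev_nth) auto
  ultimately show ?thesis by simp
qed

lemma arc_pos: "arc n A x y \<Longrightarrow> A $$ (y,x) > 0 \<and> A $$ (x,y) > 0"
  using arc_sym unfolding arc_def by blast

definition r :: "nat \<Rightarrow> nat \<Rightarrow> real" where "r x y = A $$ (x,y) / A $$ (y,x)"

lemma pr_r_pos: "wlk n A w \<Longrightarrow> pr r w > 0"
  by (rule pr_pos_gen) (auto simp: r_def dest: arc_pos)

lemma closed:
  "wlk n A w \<Longrightarrow> w \<noteq> [] \<Longrightarrow> hd w = last w \<Longrightarrow> pr r w = 1"
proof (induction "length w" arbitrary: w rule: less_induct)
  case less
  define cs where "cs = butlast w"
  define l where "l = last w"
  have wcs: "w = cs @ [l]" unfolding cs_def l_def using less(3) by simp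
  show ?case
  proof (cases "distinct cs")
    case True
    show ?thesis
    proof (cases "length cs \<ge> 2")
      case False
      then have le1: "length cs \<le> 1" by simp
      show ?thesis
      proof (cases cs)
        case Nil then show ?thesis using wcs by simp
      next
        case (Cons a t)
        then have "t = []" using le1 by simp
        then have 2: "cs = [a]" using Cons by simp
        then have "w = [a, l]" using wcs by simp
        moreover have "a = l" using less(4) calculation by simp
        ultimately show ?thesis using less(2) by (simp add: arc_def)
      qed
    next
      case k2: True
      have cne: "cs \<noteq> []" using k2 by auto
      have hl: "hd cs = l" using less(4) wcs cne by simp
      have wc: "w = cs @ [hd cs]" using wcs hl by simp
      have cyc: "is_cycle n A cs"
        unfolding is_cycle_def
      proof (intro conjI allI impI)
        show "2 \<le> length cs" "distinct cs" by fact+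
        fix m assume m: "m < length cs"
        have "arc n A (w ! m) (w ! (m + 1))" using wlk_nth[OF less(2)] m wcs by simp
        moreover have "w ! m = cs ! m" using m wc by (simp add: nth_append)
        moreover have "w ! (m + 1) = cs ! ((m + 1) mod length cs)" using wc nth_close[OF cne m] by simp
        ultimately show "arc n A (cs ! m) (cs ! ((m + 1) mod length cs))" by simp
      qed
      then have "cycle_weight A (rev cs) = cycle_weight A cs" using cb unfolding cycle_balanced_def by blast
      then have eq: "pr (\<lambda>x y. A $$ (x,y)) w = pr (\<lambda>x y. A $$ (y,x)) w"
        using cw[OF cne, of A] cw_rev[OF k2, of A] wc by simp
      have pos: "pr (\<lambda>x y. A $$ (y,x)) w > 0"
        by (rule pr_pos_gen[OF less(2)]) (auto dest: arc_pos)
      have "pr r w = pr (\<lambda>x y. A $$ (x,y)) w / pr (\<lambda>x y. A $$ (y,x)) w"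
        unfolding r_def by (rule pr_div)
      then show ?thesis using eq pos by simp
    qed
  next
    case False
    then obtain xs y ys zs where d: "cs = xs @ [y] @ ys @ [y] @ zs"
      using not_distinct_decomp by blast
    define w1 where "w1 = y # ys @ [y]"
    define w2 where "w2 = xs @ [y] @ zs @ [l]"
    have wd: "w = xs @ y # (ys @ y # (zs @ [l]))" using wcs d by simp
    have wl: "wlk n A (xs @ [y])" "wlk n A (y # (ys @ y # (zs @ [l])))"
      using less(2) wlk_app[of n A xs y "ys @ y # (zs @ [l])"] wd by auto
    then have wl2: "wlk n A w1" "wlk n A (y # zs @ [l])"
      using wlk_app[of n A "y # ys" y "zs @ [l]"] unfolding w1_def by auto
    have ww2: "wlk n A w2" using wl(1) wl2(2) wlk_app[of n A xs y "zs @ [l]"] unfolding w2_def by simp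
    have p1: "pr r w1 = 1"
      using less(1)[of w1] wl2(1) unfolding w1_def wd by simp
    have p2: "pr r w2 = 1"
    proof (rule less(1))
      show "length w2 < length w" unfolding w2_def wd by simp
      show "wlk n A w2" by fact
      show "w2 \<noteq> []" unfolding w2_def by simp
      have "hd w2 = hd w" unfolding w2_def wd by (cases xs) auto
      moreover have "last w2 = last w" unfolding w2_def wd by simp
      ultimately show "hd w2 = last w2" using less(4) by simp
    qed
    have "pr r w = pr r (xs @ [y]) * pr r (y # (ys @ y # (zs @ [l])))" unfolding wd by (rule pr_app)
    also have "pr r (y # (ys @ y # (zs @ [l]))) = pr r w1 * pr r (y # zs @ [l])"
      unfolding w1_def using pr_app[of r "y # ys" y "zs @ [l]"] by simp
    also have "pr r (xs @ [y]) * (pr r w1 * pr r (y # zs @ [l])) = pr r w2 * pr r w1"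
      unfolding w2_def using pr_app[of r xs y "zs @ [l]"] by simp
    finally show ?thesis using p1 p2 by simp
  qed
qed

definition W :: "nat \<Rightarrow> nat list" where
  "W j = (SOME w. wlk n A w \<and> w \<noteq> [] \<and> hd w = 0 \<and> last w = j)"

definition beta :: "nat \<Rightarrow> real" where "beta j = pr r (W j)"

lemma W: "j < n \<Longrightarrow> wlk n A (W j) \<and> W j \<noteq> [] \<and> hd (W j) = 0 \<and> last (W j) = j"
  unfolding W_def by (rule someI_ex) (use reach n2 in auto)

lemma beta_pos: "j < n \<Longrightarrow> beta j > 0"
  unfolding beta_def using W pr_r_pos by blast

lemma db:
  assumes i: "i < n" and j: "j < n"
  shows "beta i * A $$ (i,j) = beta j * A $$ (j,i)"
proof (cases "i = j")
  case True then show ?thesis by simp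
next
  case ne: False
  show ?thesis
  proof (cases "A $$ (i,j) > 0")
    case True
    then have aji: "arc n A j i" unfolding arc_def using i j ne by simp
    then have aij: "arc n A i j" by (rule arc_sym)
    have pos: "A $$ (i,j) > 0" "A $$ (j,i) > 0" using arc_pos[OF aij] by auto
    have Wi: "wlk n A (W i)" "W i \<noteq> []" "hd (W i) = 0" "last (W i) = i" using W i by auto
    have Wj: "wlk n A (W j)" "W j \<noteq> []" "hd (W j) = 0" "last (W j) = j" using W j by auto
    have rW: "wlk n A (rev (W j))" using wlk_rev[OF arc_sym Wj(1)] .
    define c where "c = W i @ rev (W j)"
    have wc: "wlk n A c" unfolding c_def using Wi Wj rW aij by (subst wlk_app2) (auto simp: hd_rev)
    have h1: "pr r c = 1"
      by (rule closed[OF wc]) (auto simp: c_def Wi Wj last_rev)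
    have h2: "pr r c = beta i * r i j * pr r (rev (W j))"
      unfolding c_def beta_def using Wi Wj by (subst pr_app2) (auto simp: hd_rev)
    have h3: "pr r (rev (W j)) = 1 / beta j"
    proof -
      have "pr r (rev (W j)) = pr (\<lambda>x y. 1 / r x y) (W j)"
        unfolding pr_rev by (simp add: r_def)
      also have "\<dots> = pr (\<lambda>x y. 1) (W j) / pr r (W j)" by (rule pr_div)
      finally show ?thesis unfolding beta_def pr_one .
    qed
    have "beta i * r i j * (1 / beta j) = pr r c" using h2 h3 by simp
    then have "beta i * r i j * (1 / beta j) = 1" using h1 by (rule trans)
    then have eq: "beta i * r i j = beta j" using beta_pos[OF j] by (simp add: field_simps)
    have "beta j * A $$ (j,i) = beta i * (A $$ (i,j) / A $$ (j,i)) * A $$ (j,i)"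
      using eq unfolding r_def by simp
    also have "\<dots> = beta i * A $$ (i,j)" using pos by simp
    finally show ?thesis by simp
  next
    case False
    then have z: "A $$ (i,j) = 0" using nonneg i j ne by force
    have "A $$ (j,i) = 0"
    proof (rule ccontr)
      assume "A $$ (j,i) \<noteq> 0"
      then have "A $$ (j,i) > 0" using nonneg i j ne by force
      then have "arc n A i j" unfolding arc_def using i j ne by simp
      then show False using arc_pos z by force
    qed
    then show ?thesis using z by simp
  qed
qed

end

lemma maxp:
  fixes w :: "nat \<Rightarrow> nat \<Rightarrow> real" and z :: "nat \<Rightarrow> real"
  assumes wnn: "\<forall>i<n. \<forall>j<n. i \<noteq> j \<longrightarrow> w i j \<ge> 0"
    and conn: "\<And>S. S \<subseteq> {0..<n} \<Longrightarrow> S \<noteq> {} \<Longrightarrow> S \<noteq> {0..<n} \<Longrightarrow> \<exists>i\<in>S. \<exists>j\<in>{0..<n} - S. i \<noteq> j \<and> w i j > 0"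
    and eq: "\<forall>i<n. (\<Sum>j<n. w i j * (z i - z j)) = 0"
    and n0: "0 < n"
  shows "\<forall>i<n. z i = z 0"
proof -
  define M where "M = Max (z ` {..<n})"
  have fin: "finite (z ` {..<n})" by simp
  have ne: "z ` {..<n} \<noteq> {}" using n0 by auto
  have le: "z i \<le> M" if "i < n" for i unfolding M_def using that by (intro Max_ge) auto
  define S where "S = {i\<in>{0..<n}. z i = M}"
  have "M \<in> z ` {..<n}" unfolding M_def by (rule Max_in[OF fin ne])
  then obtain i0 where i0: "i0 < n" "z i0 = M" by auto
  then have "i0 \<in> S" unfolding S_def by simp
  then have Sne: "S \<noteq> {}" by blast
  have Ssub: "S \<subseteq> {0..<n}" unfolding S_def by auto
  have "S = {0..<n}"
  proof (rule ccontr)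
    assume "S \<noteq> {0..<n}"
    then obtain i j where ij: "i \<in> S" "j \<in> {0..<n} - S" "i \<noteq> j" "w i j > 0"
      using conn[OF Ssub Sne] by blast
    have i: "i < n" "z i = M" using ij unfolding S_def by auto
    have j: "j < n" "z j < M" using ij le[of j] unfolding S_def by auto
    have "0 < (\<Sum>l<n. w i l * (z i - z l))"
    proof (rule sum_pos2)
      show "j \<in> {..<n}" using j by simp
      show "0 < w i j * (z i - z j)" using ij(4) i j by simp
      fix l assume l: "l \<in> {..<n}"
      show "0 \<le> w i l * (z i - z l)"
      proof (cases "l = i")
        case True then show ?thesis by simp
      next
        case False
        then have "w i l \<ge> 0" using wnn i l by auto
        moreover have "z i - z l \<ge> 0" using i le[of l] l by simp
        ultimately show ?thesis by simp
      qed
    qed simp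
    then show False using eq[rule_format, OF i(1)] i(2) by simp
  qed
  then have zM: "z i = M" if "i < n" for i
  proof -
    have "i \<in> S" using that \<open>S = {0..<n}\<close> by simp
    then show ?thesis unfolding S_def by simp
  qed
  show ?thesis using zM n0 by simp
qed

lemma mult_entry:
  assumes "A \<in> carrier_mat n n" "B \<in> carrier_mat n n" "i < n" "j < n"
  shows "(A * B) $$ (i,j) = (\<Sum>l<n. A $$ (i,l) * B $$ (l,j))"
  using assms by (auto simp: scalar_prod_def atLeast0LessThan intro!: sum.cong)

lemma zero_smult_one: "(0::real) \<cdot>\<^sub>m 1\<^sub>m n = 0\<^sub>m n n"
  by (rule eq_matI) auto

context gsetting
begin

abbreviation "Lc \<equiv> calL_matrix n A"

lemma Lc_carrier: "Lc \<in> carrier_mat n n" unfolding calL_matrix_def by simp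

lemma Lc_entry: "i < n \<Longrightarrow> j < n \<Longrightarrow>
  Lc $$ (i,j) = (if i = j then (\<Sum>k\<in>{..<n} - {i}. A $$ (i,k)) else - A $$ (i,j))"
  unfolding calL_matrix_def by (simp add: atLeast0LessThan)

lemma Lc_row:
  assumes i: "i < n"
  shows "(\<Sum>j<n. Lc $$ (i,j) * x j) = (\<Sum>j<n. A $$ (i,j) * (x i - x j))"
proof -
  have "(\<Sum>j<n. Lc $$ (i,j) * x j) = Lc $$ (i,i) * x i + (\<Sum>j\<in>{..<n} - {i}. Lc $$ (i,j) * x j)"
    using i by (subst sum.remove[of _ i]) auto
  also have "(\<Sum>j\<in>{..<n} - {i}. Lc $$ (i,j) * x j) = (\<Sum>j\<in>{..<n} - {i}. - (A $$ (i,j) * x j))"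
    using i by (intro sum.cong) (auto simp: Lc_entry)
  also have "Lc $$ (i,i) * x i = (\<Sum>j\<in>{..<n} - {i}. A $$ (i,j) * x i)"
    using i by (simp add: Lc_entry sum_distrib_right)
  also have "(\<Sum>j\<in>{..<n} - {i}. A $$ (i,j) * x i) + (\<Sum>j\<in>{..<n} - {i}. - (A $$ (i,j) * x j))
      = (\<Sum>j\<in>{..<n} - {i}. A $$ (i,j) * (x i - x j))"
    by (simp add: sum.distrib[symmetric] right_diff_distrib)
  also have "\<dots> = (\<Sum>j<n. A $$ (i,j) * (x i - x j))"
    using i by (subst (2) sum.remove[of _ i]) auto
  finally show ?thesis .
qed

lemma Lc_col:
  assumes k: "k < n"
  shows "(\<Sum>j<n. y j * Lc $$ (j,k)) = (\<Sum>j<n. y k * A $$ (k,j) - y j * A $$ (j,k))"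
proof -
  have "(\<Sum>j<n. y j * Lc $$ (j,k)) = y k * Lc $$ (k,k) + (\<Sum>j\<in>{..<n} - {k}. y j * Lc $$ (j,k))"
    using k by (subst sum.remove[of _ k]) auto
  also have "(\<Sum>j\<in>{..<n} - {k}. y j * Lc $$ (j,k)) = (\<Sum>j\<in>{..<n} - {k}. - (y j * A $$ (j,k)))"
    using k by (intro sum.cong) (auto simp: Lc_entry)
  also have "y k * Lc $$ (k,k) = (\<Sum>j\<in>{..<n} - {k}. y k * A $$ (k,j))"
    using k by (simp add: Lc_entry sum_distrib_left)
  also have "(\<Sum>j\<in>{..<n} - {k}. y k * A $$ (k,j)) + (\<Sum>j\<in>{..<n} - {k}. - (y j * A $$ (j,k)))
      = (\<Sum>j\<in>{..<n} - {k}. y k * A $$ (k,j) - y j * A $$ (j,k))"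
    by (simp add: sum.distrib[symmetric])
  also have "\<dots> = (\<Sum>j<n. y k * A $$ (k,j) - y j * A $$ (j,k))"
    using k by (subst (2) sum.remove[of _ k]) auto
  finally show ?thesis .
qed

lemma maxpA:
  assumes "\<forall>i<n. (\<Sum>j<n. A $$ (i,j) * (z i - z j)) = 0"
  shows "\<forall>i<n. z i = z 0"
  by (rule maxp[OF nonneg _ assms]) (use irr' n2 in auto)

lemma maxpB:
  assumes "\<forall>i<n. (\<Sum>j<n. beta i * A $$ (i,j) * (z i - z j)) = 0"
  shows "\<forall>i<n. z i = z 0"
proof (rule maxp[OF _ _ assms])
  show "\<forall>i<n. \<forall>j<n. i \<noteq> j \<longrightarrow> 0 \<le> beta i * A $$ (i, j)"
  proof (intro allI impI)
    fix i j assume "i < n" "j < n" "i \<noteq> j"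
    then show "0 \<le> beta i * A $$ (i, j)" using nonneg beta_pos[of i] by (intro mult_nonneg_nonneg) auto
  qed
  fix S :: "nat set" assume S: "S \<subseteq> {0..<n}" "S \<noteq> {}" "S \<noteq> {0..<n}"
  obtain i j where ij: "i\<in>S" "j\<in>{0..<n} - S" "i \<noteq> j" "A $$ (i,j) > 0" using irr'[OF S] by blast
  then have "beta i * A $$ (i,j) > 0" using beta_pos S by auto
  then show "\<exists>i\<in>S. \<exists>j\<in>{0..<n} - S. i \<noteq> j \<and> 0 < beta i * A $$ (i, j)" using ij by blast
qed (use n2 in auto)

lemma det_Lc: "det Lc = 0"
proof -
  define v :: "real vec" where "v = vec n (\<lambda>_. 1)"
  have "Lc *\<^sub>v v = 0\<^sub>v n"
  proof (rule eq_vecI)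
    fix i assume "i < dim_vec (0\<^sub>v n :: real vec)"
    then have i: "i < n" by simp
    have "(Lc *\<^sub>v v) $ i = (\<Sum>j<n. Lc $$ (i,j) * (\<lambda>_. 1::real) j)"
      using i Lc_carrier unfolding v_def by (simp add: scalar_prod_def atLeast0LessThan)
    also have "\<dots> = 0" unfolding Lc_row[OF i] by simp
    finally show "(Lc *\<^sub>v v) $ i = 0\<^sub>v n $ i" using i by simp
  qed (use Lc_carrier in auto)
  moreover have "v \<noteq> 0\<^sub>v n"
  proof
    assume "v = 0\<^sub>v n"
    then have "v $ 0 = (0\<^sub>v n :: real vec) $ 0" by simp
    then show False using n2 unfolding v_def by simp
  qed
  moreover have "v \<in> carrier_vec n" unfolding v_def by simp
  ultimately show ?thesis using det_0_iff_vec_prod_zero[OF Lc_carrier] by blast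
qed

lemma alpha_adj: "i < n \<Longrightarrow> alpha n A i = adj_mat Lc $$ (i,i)"
  unfolding alpha_def adj_mat_def cofactor_def using Lc_carrier by simp

lemma adj_col_const:
  assumes k: "k < n" and j: "j < n"
  shows "adj_mat Lc $$ (k,j) = alpha n A j"
proof -
  have ad: "Lc * adj_mat Lc = 0\<^sub>m n n" using adj_mat(2)[OF Lc_carrier] det_Lc zero_smult_one by simp
  have "\<forall>i<n. (\<Sum>l<n. A $$ (i,l) * (adj_mat Lc $$ (i,j) - adj_mat Lc $$ (l,j))) = 0"
  proof (intro allI impI)
    fix i assume i: "i < n"
    have "(Lc * adj_mat Lc) $$ (i,j) = 0" using ad i j by simp
    then have "(\<Sum>l<n. Lc $$ (i,l) * adj_mat Lc $$ (l,j)) = 0"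
      using mult_entry[OF Lc_carrier adj_mat(1)[OF Lc_carrier] i j] by simp
    then show "(\<Sum>l<n. A $$ (i,l) * (adj_mat Lc $$ (i,j) - adj_mat Lc $$ (l,j))) = 0"
      using Lc_row[OF i, of "\<lambda>l. adj_mat Lc $$ (l,j)"] by simp
  qed
  from maxpA[OF this] have c: "\<forall>i<n. adj_mat Lc $$ (i,j) = adj_mat Lc $$ (0,j)" .
  have "adj_mat Lc $$ (k,j) = adj_mat Lc $$ (0,j)" using c k by blast
  moreover have "adj_mat Lc $$ (j,j) = adj_mat Lc $$ (0,j)" using c j by blast
  ultimately show ?thesis using alpha_adj[OF j] by simp
qed

lemma alpha_left_null:
  assumes k: "k < n"
  shows "(\<Sum>j<n. alpha n A j * Lc $$ (j,k)) = 0"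
proof -
  have ad: "adj_mat Lc * Lc = 0\<^sub>m n n" using adj_mat(3)[OF Lc_carrier] det_Lc zero_smult_one by simp
  have n0: "0 < n" using n2 by simp
  have "(adj_mat Lc * Lc) $$ (0,k) = 0" using ad n0 k by simp
  then have "(\<Sum>j<n. adj_mat Lc $$ (0,j) * Lc $$ (j,k)) = 0"
    using mult_entry[OF adj_mat(1)[OF Lc_carrier] Lc_carrier n0 k] by simp
  moreover have "(\<Sum>j<n. adj_mat Lc $$ (0,j) * Lc $$ (j,k)) = (\<Sum>j<n. alpha n A j * Lc $$ (j,k))"
    using adj_col_const n0 by (intro sum.cong) auto
  ultimately show ?thesis by simp
qed

lemma alpha_prop: "\<exists>\<kappa>. \<forall>j<n. alpha n A j = \<kappa> * beta j"
proof -
  define z where "z j = alpha n A j / beta j" for j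
  have az: "alpha n A j = z j * beta j" if "j < n" for j
    unfolding z_def using beta_pos[OF that] by simp
  have "\<forall>k<n. (\<Sum>j<n. beta k * A $$ (k,j) * (z k - z j)) = 0"
  proof (intro allI impI)
    fix k assume k: "k < n"
    have "0 = (\<Sum>j<n. alpha n A k * A $$ (k,j) - alpha n A j * A $$ (j,k))"
      using alpha_left_null[OF k] Lc_col[OF k] by simp
    also have "\<dots> = (\<Sum>j<n. beta k * A $$ (k,j) * (z k - z j))"
    proof (intro sum.cong refl)
      fix j assume "j \<in> {..<n}"
      then have j: "j < n" by simp
      have "alpha n A j * A $$ (j,k) = z j * (beta j * A $$ (j,k))" using az[OF j] by simp
      also have "\<dots> = z j * (beta k * A $$ (k,j))" using db[OF j k] by simp
      finally show "alpha n A k * A $$ (k,j) - alpha n A j * A $$ (j,k) = beta k * A $$ (k,j) * (z k - z j)"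
        using az[OF k] by (simp add: algebra_simps)
    qed
    finally show "(\<Sum>j<n. beta k * A $$ (k,j) * (z k - z j)) = 0" by simp
  qed
  from maxpB[OF this] have c: "\<forall>j<n. z j = z 0" .
  show ?thesis
  proof (intro exI allI impI)
    fix j assume j: "j < n"
    have "z j = z 0" using c j by blast
    then show "alpha n A j = z 0 * beta j" using az[OF j] by simp
  qed
qed

end

context gsetting
begin

lemma quad_identity:
  "2 * (\<Sum>k<n. beta k * x k * (\<Sum>j<n. A $$ (k,j) * (x k - x j)))
   = (\<Sum>k<n. \<Sum>j<n. beta k * A $$ (k,j) * (x k - x j)^2)"
proof -
  define c where "c k j = beta k * A $$ (k,j)" for k j
  have csym: "c k j = c j k" if "k < n" "j < n" for k j unfolding c_def using db[OF that] by simp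
  define S1 where "S1 = (\<Sum>k<n. \<Sum>j<n. c k j * x k * (x k - x j))"
  have L: "(\<Sum>k<n. beta k * x k * (\<Sum>j<n. A $$ (k,j) * (x k - x j))) = S1"
    unfolding S1_def c_def by (simp add: sum_distrib_left mult_ac)
  have "S1 = (\<Sum>j<n. \<Sum>k<n. c k j * x k * (x k - x j))" unfolding S1_def by (rule sum.swap)
  also have "\<dots> = (\<Sum>j<n. \<Sum>k<n. c j k * x k * (x k - x j))"
    by (intro sum.cong refl) (simp add: csym)
  finally have S1': "S1 = (\<Sum>k<n. \<Sum>j<n. c k j * x j * (x j - x k))" by simp
  have "2 * S1 = S1 + (\<Sum>k<n. \<Sum>j<n. c k j * x j * (x j - x k))" using S1' by simp
  also have "\<dots> = (\<Sum>k<n. \<Sum>j<n. c k j * (x k - x j)^2)"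
    unfolding S1_def by (simp add: sum.distrib[symmetric] power2_eq_square algebra_simps)
  finally show ?thesis using L unfolding c_def by simp
qed

lemma mult_vec_entry:
  assumes "M \<in> carrier_mat m m" "v \<in> carrier_vec m" "i < m"
  shows "(M *\<^sub>v v) $ i = (\<Sum>j<m. M $$ (i,j) * v $ j)"
  using assms by (auto simp: scalar_prod_def atLeast0LessThan intro!: sum.cong)

abbreviation "Bm \<equiv> mat_delete Lc 0 0"

lemma Bm_carrier: "Bm \<in> carrier_mat (n - 1) (n - 1)"
  using Lc_carrier unfolding mat_delete_def by auto

lemma Bm_entry: "i < n - 1 \<Longrightarrow> j < n - 1 \<Longrightarrow> Bm $$ (i,j) = Lc $$ (Suc i, Suc j)"
  unfolding mat_delete_def using Lc_carrier by simp

lemma B_nonsing: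
  assumes t: "t \<ge> 0"
  shows "det (Bm + t \<cdot>\<^sub>m 1\<^sub>m (n - 1)) \<noteq> 0"
proof
  define m where "m = n - 1"
  have nm: "n = Suc m" unfolding m_def using n2 by simp
  have Cc: "Bm + t \<cdot>\<^sub>m 1\<^sub>m (n - 1) \<in> carrier_mat m m" using Bm_carrier unfolding m_def by simp
  assume "det (Bm + t \<cdot>\<^sub>m 1\<^sub>m (n - 1)) = 0"
  then obtain v where v: "v \<in> carrier_vec m" "v \<noteq> 0\<^sub>v m" "(Bm + t \<cdot>\<^sub>m 1\<^sub>m (n - 1)) *\<^sub>v v = 0\<^sub>v m"
    using det_0_iff_vec_prod_zero[OF Cc] by blast
  define x where "x k = (if k = 0 then 0 else v $ (k - 1))" for k
  have x0: "x 0 = 0" unfolding x_def by simp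
  have Lx: "(\<Sum>j<n. Lc $$ (k,j) * x j) = - t * x k" if k: "0 < k" "k < n" for k
  proof -
    define i where "i = k - 1"
    have i: "i < m" "k = Suc i" using k unfolding i_def m_def by auto
    have "((Bm + t \<cdot>\<^sub>m 1\<^sub>m (n - 1)) *\<^sub>v v) $ i = 0" using v i by simp
    moreover have "((Bm + t \<cdot>\<^sub>m 1\<^sub>m (n - 1)) *\<^sub>v v) $ i
        = (\<Sum>j<m. (Bm $$ (i,j) + (if i = j then t else 0)) * v $ j)"
    proof -
      have "((Bm + t \<cdot>\<^sub>m 1\<^sub>m (n - 1)) *\<^sub>v v) $ i = (\<Sum>j<m. (Bm + t \<cdot>\<^sub>m 1\<^sub>m (n - 1)) $$ (i,j) * v $ j)"
        by (rule mult_vec_entry[OF Cc v(1) i(1)])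
      also have "\<dots> = (\<Sum>j<m. (Bm $$ (i,j) + (if i = j then t else 0)) * v $ j)"
      proof (intro sum.cong refl)
        fix j assume "j \<in> {..<m}"
        then have j: "j < m" by simp
        have "(Bm + t \<cdot>\<^sub>m 1\<^sub>m (n - 1)) $$ (i,j) = Bm $$ (i,j) + (t \<cdot>\<^sub>m 1\<^sub>m (n - 1)) $$ (i,j)"
          using i(1) j Bm_carrier unfolding m_def by (intro index_add_mat(1)) auto
        also have "(t \<cdot>\<^sub>m 1\<^sub>m (n - 1)) $$ (i,j) = (if i = j then t else 0)"
          using i(1) j unfolding m_def by simp
        finally show "(Bm + t \<cdot>\<^sub>m 1\<^sub>m (n - 1)) $$ (i,j) * v $ j = (Bm $$ (i,j) + (if i = j then t else 0)) * v $ j"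
          by simp
      qed
      finally show ?thesis .
    qed
    moreover have "(\<Sum>j<m. (Bm $$ (i,j) + (if i = j then t else 0)) * v $ j)
        = (\<Sum>j<m. Lc $$ (Suc i, Suc j) * v $ j) + t * v $ i"
      using i by (simp add: distrib_right sum.distrib Bm_entry m_def sum_delta_mult)
    ultimately have e: "(\<Sum>j<m. Lc $$ (Suc i, Suc j) * v $ j) = - t * v $ i" by simp
    have "(\<Sum>j<n. Lc $$ (k,j) * x j) = Lc $$ (k,0) * x 0 + (\<Sum>j<m. Lc $$ (k, Suc j) * x (Suc j))"
      unfolding nm by (rule sum.lessThan_Suc_shift)
    also have "\<dots> = (\<Sum>j<m. Lc $$ (Suc i, Suc j) * v $ j)" using i by (simp add: x_def)
    also have "\<dots> = - t * x k" using e i by (simp add: x_def)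
    finally show ?thesis .
  qed
  define D where "D = (\<Sum>k<n. \<Sum>j<n. beta k * A $$ (k,j) * (x k - x j)^2)"
  have tnn: "0 \<le> beta k * A $$ (k,j) * (x k - x j)^2" if "k < n" "j < n" for k j
  proof (cases "k = j")
    case True then show ?thesis by simp
  next
    case False
    then have "A $$ (k,j) \<ge> 0" using nonneg that by blast
    then show ?thesis using beta_pos[OF that(1)] by simp
  qed
  have D0: "D \<ge> 0" unfolding D_def using tnn by (intro sum_nonneg) auto
  have "D = 2 * (\<Sum>k<n. beta k * x k * (\<Sum>j<n. A $$ (k,j) * (x k - x j)))"
    unfolding D_def by (rule quad_identity[symmetric])
  also have "(\<Sum>k<n. beta k * x k * (\<Sum>j<n. A $$ (k,j) * (x k - x j)))
      = (\<Sum>k<n. - t * (beta k * (x k)^2))"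
  proof (intro sum.cong refl)
    fix k assume "k \<in> {..<n}"
    then have k: "k < n" by simp
    show "beta k * x k * (\<Sum>j<n. A $$ (k,j) * (x k - x j)) = - t * (beta k * (x k)^2)"
    proof (cases "k = 0")
      case True then show ?thesis using x0 by simp
    next
      case False
      then have "(\<Sum>j<n. A $$ (k,j) * (x k - x j)) = - t * x k"
        using Lx[of k] k Lc_row[OF k, of x] by simp
      then show ?thesis by (simp add: power2_eq_square mult_ac)
    qed
  qed
  also have "\<dots> = - t * (\<Sum>k<n. beta k * (x k)^2)" by (simp add: sum_distrib_left)
  finally have "D = - 2 * t * (\<Sum>k<n. beta k * (x k)^2)" by simp
  moreover have "(\<Sum>k<n. beta k * (x k)^2) \<ge> 0"
    using beta_pos by (intro sum_nonneg) (simp add: less_imp_le)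
  ultimately have "D \<le> 0" using t by (simp add: mult_nonneg_nonneg)
  then have Dz: "D = 0" using D0 by simp
  have zero_terms: "A $$ (k,j) * (x k - x j) = 0" if kj: "k < n" "j < n" for k j
  proof -
    have "beta k * A $$ (k,j) * (x k - x j)^2 \<le> (\<Sum>j'<n. beta k * A $$ (k,j') * (x k - x j')^2)"
      using kj tnn by (intro member_le_sum) auto
    also have "\<dots> \<le> D" unfolding D_def using kj tnn
      by (intro member_le_sum[of k "{..<n}" "\<lambda>k. \<Sum>j'<n. beta k * A $$ (k,j') * (x k - x j')^2"] sum_nonneg) auto
    finally have "beta k * A $$ (k,j) * (x k - x j)^2 \<le> 0" using Dz by simp
    then have "beta k * A $$ (k,j) * (x k - x j)^2 = 0" using tnn[OF kj] by simp
    then have "A $$ (k,j) * (x k - x j)^2 = 0" using beta_pos[OF kj(1)] by simp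
    then show ?thesis by (simp add: power2_eq_square)
  qed
  have "\<forall>k<n. (\<Sum>j<n. A $$ (k,j) * (x k - x j)) = 0"
  proof (intro allI impI)
    fix k assume "k < n"
    then show "(\<Sum>j<n. A $$ (k,j) * (x k - x j)) = 0" using zero_terms by (intro sum.neutral) auto
  qed
  from maxpA[OF this] have c: "\<forall>k<n. x k = x 0" .
  have "v = 0\<^sub>v m"
  proof (rule eq_vecI)
    fix i assume "i < dim_vec (0\<^sub>v m :: real vec)"
    then have i: "i < m" by simp
    have "Suc i < n" using i nm by simp
    then have "x (Suc i) = x 0" using c by blast
    then show "v $ i = 0\<^sub>v m $ i" using i x0 unfolding x_def by simp
  qed (use v in simp)
  then show False using v by simp
qed

lemma alpha0_pos: "alpha n A 0 > 0"
proof -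
  define m where "m = n - 1"
  have Bc: "Bm \<in> carrier_mat m m" using Bm_carrier unfolding m_def .
  have mB: "- Bm \<in> carrier_mat m m" using Bc by simp
  define p where "p = char_poly (- Bm)"
  have pv: "poly p t = det (Bm + t \<cdot>\<^sub>m 1\<^sub>m m)" for t
  proof -
    have "poly p t = det (- (char_matrix (- Bm) t))" unfolding p_def by (rule char_poly_matrix[OF mB])
    also have "- (char_matrix (- Bm) t) = Bm + t \<cdot>\<^sub>m 1\<^sub>m m"
      unfolding char_matrix_def using Bc Lc_carrier unfolding m_def by (intro eq_matI) auto
    finally show ?thesis .
  qed
  have nz: "poly p t \<noteq> 0" if "t \<ge> 0" for t
    unfolding pv using B_nonsing[OF that] unfolding m_def .
  have lc: "lead_coeff p = 1" using degree_monic_char_poly[OF mB] unfolding p_def by simp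
  obtain N where N: "\<forall>x\<ge>N. poly p x \<ge> lead_coeff p" using poly_pinfty_gt_lc[of p] lc by auto
  define T where "T = max N 0"
  have pT: "poly p T \<ge> 1" using N lc unfolding T_def by simp
  have p0: "poly p 0 > 0"
  proof (rule ccontr)
    assume "\<not> poly p 0 > 0"
    then have "poly p 0 \<le> 0" by simp
    moreover have "0 \<le> poly p T" using pT by simp
    moreover have "0 \<le> T" unfolding T_def by simp
    ultimately obtain t where "0 \<le> t" "t \<le> T" "poly p t = 0"
      using IVT[of "\<lambda>x. poly p x" 0 0 T] by auto
    then show False using nz by blast
  qed
  have "Bm + 0 \<cdot>\<^sub>m 1\<^sub>m m = Bm" using Bc Lc_carrier unfolding m_def by (intro eq_matI) auto
  then have "poly p 0 = det Bm" using pv[of 0] by simp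
  moreover have "alpha n A 0 = det Bm" unfolding alpha_def by simp
  ultimately show ?thesis using p0 by simp
qed

lemma alpha_pos_db:
  "\<forall>i<n. alpha n A i > 0" "\<forall>i<n. \<forall>j<n. alpha n A i * A $$ (i,j) = alpha n A j * A $$ (j,i)"
proof -
  obtain \<kappa> where k: "\<forall>j<n. alpha n A j = \<kappa> * beta j" using alpha_prop by blast
  have n0: "0 < n" using n2 by simp
  have "alpha n A 0 = \<kappa> * beta 0" using k n0 by blast
  then have kp: "\<kappa> > 0" using alpha0_pos beta_pos[OF n0] by (simp add: zero_less_mult_iff)
  show "\<forall>i<n. alpha n A i > 0" using k kp beta_pos by simp
  show "\<forall>i<n. \<forall>j<n. alpha n A i * A $$ (i,j) = alpha n A j * A $$ (j,i)"
  proof (intro allI impI)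
    fix i j assume ij: "i < n" "j < n"
    have "alpha n A i * A $$ (i,j) = \<kappa> * (beta i * A $$ (i,j))" using k ij by simp
    also have "\<dots> = \<kappa> * (beta j * A $$ (j,i))" using db[OF ij] by simp
    also have "\<dots> = alpha n A j * A $$ (j,i)" using k ij by simp
    finally show "alpha n A i * A $$ (i,j) = alpha n A j * A $$ (j,i)" .
  qed
qed

end

context gsetting
begin

lemma conn_entry: "i < n \<Longrightarrow> j < n \<Longrightarrow> i \<noteq> j \<Longrightarrow> conn_matrix n A $$ (i,j) = A $$ (i,j)"
  unfolding conn_matrix_def by simp

lemma ray:
  fixes \<mu> :: real and h \<phi> :: "nat \<Rightarrow> real"
  assumes phi: "\<exists>i<n. \<phi> i \<noteq> 0"
  shows "lambda1 n A \<mu> h * (\<Sum>i<n. alpha n A i * (\<phi> i)^2)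
    \<le> - (\<Sum>i<n. alpha n A i * \<phi> i * (\<Sum>j<n. (\<mu> * conn_matrix n A $$ (i,j) + (if i = j then h i else 0)) * \<phi> j))"
proof -
  define a where "a i = alpha n A i" for i
  have apos: "a i > 0" if "i < n" for i unfolding a_def using alpha_pos_db(1) that by blast
  have adb: "a i * A $$ (i,j) = a j * A $$ (j,i)" if "i < n" "j < n" for i j
    unfolding a_def using alpha_pos_db(2) that by blast
  define s where "s i = sqrt (a i)" for i
  have spos: "s i > 0" if "i < n" for i unfolding s_def using apos[OF that] by simp
  have ss: "s i * s i = a i" if "i < n" for i unfolding s_def using apos[OF that] by simp
  define M where "M i j = \<mu> * conn_matrix n A $$ (i,j) + (if i = j then h i else 0)" for i j
  have Msym: "a i * M i j = a j * M j i" if ij: "i < n" "j < n" for i j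
  proof (cases "i = j")
    case True then show ?thesis by simp
  next
    case False
    then have "M i j = \<mu> * A $$ (i,j)" "M j i = \<mu> * A $$ (j,i)"
      unfolding M_def using ij conn_entry by auto
    then show ?thesis using adb[OF ij] by (simp add: mult.left_commute)
  qed
  define S where "S i j = s i * M i j / s j" for i j
  have Ssym: "\<forall>i<n. \<forall>j<n. S i j = S j i"
  proof (intro allI impI)
    fix i j assume ij: "i < n" "j < n"
    have "s i * M i j * s i = (s i * s i) * M i j" by (simp only: mult_ac)
    also have "\<dots> = a i * M i j" using ss[OF ij(1)] by simp
    also have "\<dots> = a j * M j i" by (rule Msym[OF ij])
    also have "\<dots> = (s j * s j) * M j i" using ss[OF ij(2)] by simp
    also have "\<dots> = s j * M j i * s j" by (simp only: mult_ac)
    finally have "s i * M i j * s i = s j * M j i * s j" .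
    then show "S i j = S j i" unfolding S_def using spos[OF ij(1)] spos[OF ij(2)]
      by (simp add: field_simps)
  qed
  define x where "x i = s i * \<phi> i" for i
  have nx: "nrm n x = (\<Sum>i<n. a i * (\<phi> i)^2)"
    unfolding nrm_def x_def by (intro sum.cong refl) (simp add: power2_eq_square ss mult_ac flip: ss)
  obtain i0 where i0: "i0 < n" "\<phi> i0 \<noteq> 0" using phi by blast
  have npos: "nrm n x > 0" unfolding nx
  proof (rule sum_pos2)
    show "i0 \<in> {..<n}" using i0 by simp
    show "0 < a i0 * (\<phi> i0)^2" using i0 apos by simp
    fix i assume "i \<in> {..<n}" then show "0 \<le> a i * (\<phi> i)^2" using apos by (simp add: less_imp_le)
  qed simp
  have blx: "bl n S x x = (\<Sum>i<n. a i * \<phi> i * (\<Sum>j<n. M i j * \<phi> j))"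
    unfolding bl_def
  proof (intro sum.cong refl)
    fix i assume "i \<in> {..<n}" then have i: "i < n" by simp
    have "(\<Sum>j<n. x i * S i j * x j) = (\<Sum>j<n. a i * \<phi> i * (M i j * \<phi> j))"
    proof (intro sum.cong refl)
      fix j assume "j \<in> {..<n}" then have j: "j < n" by simp
      have "x i * S i j * x j = (s i * s i) * \<phi> i * M i j * \<phi> j * (s j / s j)"
        unfolding x_def S_def by (simp add: mult_ac)
      also have "\<dots> = a i * \<phi> i * (M i j * \<phi> j)" using ss[OF i] spos[OF j] by simp
      finally show "x i * S i j * x j = a i * \<phi> i * (M i j * \<phi> j)" .
    qed
    also have "\<dots> = a i * \<phi> i * (\<Sum>j<n. M i j * \<phi> j)" by (simp add: sum_distrib_left)
    finally show "(\<Sum>j<n. x i * S i j * x j) = a i * \<phi> i * (\<Sum>j<n. M i j * \<phi> j)" .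
  qed
  obtain t w where tw: "bl n S x x \<le> t * nrm n x" "\<exists>i<n. w i \<noteq> 0"
    "\<forall>i<n. (\<Sum>j<n. S i j * w j) = t * w i"
    using sym_eig[OF Ssym npos] by blast
  define vv where "vv j = w j / s j" for j
  have vv0: "\<exists>i<n. vv i \<noteq> 0" using tw(2) spos unfolding vv_def by fastforce
  have vvev: "\<forall>i<n. (\<Sum>j<n. M i j * vv j) = t * vv i"
  proof (intro allI impI)
    fix i assume i: "i < n"
    have "(\<Sum>j<n. S i j * w j) = s i * (\<Sum>j<n. M i j * vv j)"
      unfolding S_def vv_def by (simp add: sum_distrib_left mult_ac)
    then have "s i * (\<Sum>j<n. M i j * vv j) = t * w i" using tw(3) i by simp
    then show "(\<Sum>j<n. M i j * vv j) = t * vv i"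
      unfolding vv_def using spos[OF i] by (simp add: field_simps)
  qed
  define Mm where "Mm = mat n n (\<lambda>(i,j). M i j)"
  have Mmc: "Mm \<in> carrier_mat n n" unfolding Mm_def by simp
  have "t \<le> spectral_bound Mm"
  proof (rule sb_ge[OF Mmc vv0])
    show "\<forall>i<n. (\<Sum>j<n. Mm $$ (i,j) * vv j) = t * vv i"
    proof (intro allI impI)
      fix i assume i: "i < n"
      have "(\<Sum>j<n. Mm $$ (i,j) * vv j) = (\<Sum>j<n. M i j * vv j)"
        unfolding Mm_def using i by (intro sum.cong refl) simp
      then show "(\<Sum>j<n. Mm $$ (i,j) * vv j) = t * vv i" using vvev i by simp
    qed
  qed
  moreover have "lambda1 n A \<mu> h = - spectral_bound Mm"
    unfolding lambda1_def Mm_def M_def by simp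
  ultimately have lt: "lambda1 n A \<mu> h \<le> - t" by simp
  have "lambda1 n A \<mu> h * nrm n x \<le> - t * nrm n x"
    using lt npos by (intro mult_right_mono) auto
  also have "\<dots> \<le> - bl n S x x" using tw(1) by simp
  finally show ?thesis unfolding nx blx a_def M_def .
qed

lemma equil:
  assumes eq: "pos_equilibrium n A \<mu> rr w" and i: "i < n"
  shows "(\<Sum>j<n. (\<mu> * conn_matrix n A $$ (i,j) + (if i = j then g i else 0)) * w j)
     = w i * (w i - rr i + g i)"
proof -
  have e: "\<mu> * (\<Sum>j<n. conn_matrix n A $$ (i,j) * w j) + w i * (rr i - w i) = 0"
    using eq i unfolding pos_equilibrium_def by blast
  have "(\<Sum>j<n. (\<mu> * conn_matrix n A $$ (i,j) + (if i = j then g i else 0)) * w j)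
      = \<mu> * (\<Sum>j<n. conn_matrix n A $$ (i,j) * w j) + (\<Sum>j<n. (if i = j then g i else 0) * w j)"
    by (simp add: distrib_right sum.distrib sum_distrib_left mult.assoc)
  also have "(\<Sum>j<n. (if i = j then g i else 0) * w j) = g i * w i"
    using i by (simp add: sum_delta_mult)
  finally show ?thesis using e by (simp add: algebra_simps)
qed

end

theorem mainTheorem5:
  fixes n :: nat and A :: "real mat" and b c \<mu>u \<mu>v :: real
    and p q u v :: "nat \<Rightarrow> real"
  assumes n2: "n \<ge> 2"
    and Adim: "A \<in> carrier_mat n n"
    and Anonneg: "\<forall>i<n. \<forall>j<n. i \<noteq> j \<longrightarrow> A $$ (i,j) \<ge> 0"
    and A1: "b > 0" "c > 0" "b * c \<le> 1" "\<forall>i<n. p i > 0" "\<forall>i<n. q i > 0"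
    and A2: "irreducible_mat n (conn_matrix n A)"
    and A3: "cycle_balanced n A"
    and mu: "\<mu>u > 0" "\<mu>v > 0"
    and ustar: "pos_equilibrium n A \<mu>u p u"
    and vstar: "pos_equilibrium n A \<mu>v q v"
  shows
    "lambda1 n A \<mu>u (\<lambda>i. p i - c * v i) * (\<Sum>i<n. alpha n A i * (u i)\<^sup>2)
       + c ^ 3 * lambda1 n A \<mu>v (\<lambda>i. q i - b * u i) * (\<Sum>i<n. alpha n A i * (v i)\<^sup>2)
     \<le> - (\<Sum>i<n. alpha n A i * (c * v i - u i)\<^sup>2 * (c * v i + u i))
   \<and> - (\<Sum>i<n. alpha n A i * (c * v i - u i)\<^sup>2 * (c * v i + u i)) \<le> 0
   \<and> ((lambda1 n A \<mu>u (\<lambda>i. p i - c * v i) * (\<Sum>i<n. alpha n A i * (u i)\<^sup>2)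
         + c ^ 3 * lambda1 n A \<mu>v (\<lambda>i. q i - b * u i) * (\<Sum>i<n. alpha n A i * (v i)\<^sup>2) = 0
        \<and> (\<Sum>i<n. alpha n A i * (c * v i - u i)\<^sup>2 * (c * v i + u i)) = 0)
       \<longrightarrow> (\<forall>i<n. u i = c * v i) \<and> b * c = 1)
   \<and> ((lambda1 n A \<mu>v (\<lambda>i. q i - b * u i) \<ge> 0 \<and> lambda1 n A \<mu>u (\<lambda>i. p i - c * v i) \<ge> 0)
       \<longrightarrow> lambda1 n A \<mu>v (\<lambda>i. q i - b * u i) = 0 \<and> lambda1 n A \<mu>u (\<lambda>i. p i - c * v i) = 0
           \<and> b * c = 1 \<and> (\<forall>i<n. u i = c * v i))"
proof -
  interpret gsetting n A using n2 Anonneg A2 A3 by unfold_locales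
  define a where "a i = alpha n A i" for i
  have apos: "a i > 0" if "i < n" for i unfolding a_def using alpha_pos_db(1) that by blast
  have upos: "u i > 0" if "i < n" for i using ustar that unfolding pos_equilibrium_def by blast
  have vpos: "v i > 0" if "i < n" for i using vstar that unfolding pos_equilibrium_def by blast
  have n0: "0 < n" using n2 by simp
  define lu where "lu = lambda1 n A \<mu>u (\<lambda>i. p i - c * v i)"
  define lv where "lv = lambda1 n A \<mu>v (\<lambda>i. q i - b * u i)"
  define Su where "Su = (\<Sum>i<n. a i * (u i)^2)"
  define Sv where "Sv = (\<Sum>i<n. a i * (v i)^2)"
  define X1 where "X1 = (\<Sum>i<n. a i * (u i)^2 * (c * v i - u i))"
  define X2 where "X2 = (\<Sum>i<n. a i * (v i)^2 * (b * u i - v i))"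
  define Y2 where "Y2 = (\<Sum>i<n. c^2 * a i * (v i)^2 * (u i - c * v i))"
  define P where "P = (\<Sum>i<n. c^2 * a i * (v i)^2 * u i)"
  define E where "E = (\<Sum>i<n. a i * (c * v i - u i)^2 * (c * v i + u i))"
  have Supos: "Su > 0" unfolding Su_def
  proof (intro sum_pos)
    fix i assume "i \<in> {..<n}" then have i: "i < n" by simp
    show "0 < a i * (u i)^2" using apos[OF i] upos[OF i] by simp
  qed (use n0 in auto)
  have Svpos: "Sv > 0" unfolding Sv_def
  proof (intro sum_pos)
    fix i assume "i \<in> {..<n}" then have i: "i < n" by simp
    show "0 < a i * (v i)^2" using apos[OF i] vpos[OF i] by simp
  qed (use n0 in auto)
  have Ppos: "P > 0" unfolding P_def
  proof (intro sum_pos)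
    fix i assume "i \<in> {..<n}" then have i: "i < n" by simp
    show "0 < c^2 * a i * (v i)^2 * u i" using apos[OF i] vpos[OF i] upos[OF i] A1(2) by simp
  qed (use n0 in auto)
  have u0: "\<exists>i<n. u i \<noteq> 0" using upos n0 by force
  have v0: "\<exists>i<n. v i \<noteq> 0" using vpos n0 by force
  have r1: "lu * Su \<le> X1"
  proof -
    have "lu * Su \<le> - (\<Sum>i<n. a i * u i * (\<Sum>j<n. (\<mu>u * conn_matrix n A $$ (i,j)
        + (if i = j then p i - c * v i else 0)) * u j))"
      using ray[OF u0, of \<mu>u "\<lambda>i. p i - c * v i"] unfolding lu_def Su_def a_def by simp
    also have "\<dots> = - (\<Sum>i<n. a i * u i * (u i * (u i - p i + (p i - c * v i))))"
      using equil[OF ustar, where g="\<lambda>i. p i - c * v i"] by (intro arg_cong[where f=uminus] sum.cong refl) simp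
    also have "\<dots> = X1" unfolding X1_def
      by (simp add: sum_negf[symmetric] power2_eq_square algebra_simps)
    finally show ?thesis .
  qed
  have r2: "lv * Sv \<le> X2"
  proof -
    have "lv * Sv \<le> - (\<Sum>i<n. a i * v i * (\<Sum>j<n. (\<mu>v * conn_matrix n A $$ (i,j)
        + (if i = j then q i - b * u i else 0)) * v j))"
      using ray[OF v0, of \<mu>v "\<lambda>i. q i - b * u i"] unfolding lv_def Sv_def a_def by simp
    also have "\<dots> = - (\<Sum>i<n. a i * v i * (v i * (v i - q i + (q i - b * u i))))"
      using equil[OF vstar, where g="\<lambda>i. q i - b * u i"] by (intro arg_cong[where f=uminus] sum.cong refl) simp
    also have "\<dots> = X2" unfolding X2_def
      by (simp add: sum_negf[symmetric] power2_eq_square algebra_simps)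
    finally show ?thesis .
  qed
  have c3: "c^3 > 0" using A1(2) by simp
  have r2': "c^3 * lv * Sv \<le> c^3 * X2" using r2 c3 by (simp add: mult.assoc mult_left_mono)
  have YX: "Y2 - c^3 * X2 = (1 - b * c) * P"
    unfolding Y2_def X2_def P_def
    by (simp add: sum_distrib_left sum_subtractf[symmetric] power2_eq_square power3_eq_cube algebra_simps)
  have YX2: "c^3 * X2 \<le> Y2" using YX Ppos A1(3) by (smt (verit) mult_nonneg_nonneg)
  have XY: "X1 + Y2 = - E"
    unfolding X1_def Y2_def E_def
    by (simp add: sum.distrib[symmetric] sum_negf[symmetric] power2_eq_square algebra_simps)
  have E0: "E \<ge> 0" unfolding E_def
  proof (intro sum_nonneg)
    fix i assume "i \<in> {..<n}" then have i: "i < n" by simp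
    have "c * v i + u i > 0" using vpos[OF i] upos[OF i] A1(2) by (simp add: add_pos_pos)
    then show "0 \<le> a i * (c * v i - u i)^2 * (c * v i + u i)" using apos[OF i] by simp
  qed
  have main: "lu * Su + c^3 * lv * Sv \<le> - E" using r1 r2' YX2 XY by linarith
  have eqpart: "(\<forall>i<n. u i = c * v i) \<and> b * c = 1" if h: "lu * Su + c^3 * lv * Sv = 0" "E = 0"
  proof
    show "\<forall>i<n. u i = c * v i"
    proof (intro allI impI)
      fix i assume i: "i < n"
      have "a i * (c * v i - u i)^2 * (c * v i + u i) \<le> E"
        unfolding E_def using i
      proof (intro member_le_sum)
        fix k assume "k \<in> {..<n} - {i}" then have k: "k < n" by simp
        have "c * v k + u k > 0" using vpos[OF k] upos[OF k] A1(2) by (simp add: add_pos_pos)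
        then show "0 \<le> a k * (c * v k - u k)^2 * (c * v k + u k)" using apos[OF k] by simp
      qed auto
      moreover have "a i * (c * v i - u i)^2 * (c * v i + u i) \<ge> 0"
        using apos[OF i] upos[OF i] vpos[OF i] A1(2) by (simp add: add_pos_pos less_imp_le)
      ultimately have "a i * (c * v i - u i)^2 * (c * v i + u i) = 0" using h(2) by simp
      moreover have "a i > 0" "c * v i + u i > 0" using apos[OF i] upos[OF i] vpos[OF i] A1(2) by (auto simp: add_pos_pos)
      ultimately have "(c * v i - u i)^2 = 0" by simp
      then show "u i = c * v i" by simp
    qed
    have "c^3 * X2 = Y2" using h r1 r2' YX2 XY by linarith
    then have "(1 - b * c) * P = 0" using YX by simp
    then show "b * c = 1" using Ppos by simp
  qed
  have g1: "lu * Su + c ^ 3 * lv * Sv \<le> - E" by (rule main)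
  have g2: "- E \<le> 0" using E0 by simp
  have g3: "lu * Su + c ^ 3 * lv * Sv = 0 \<and> E = 0 \<longrightarrow> (\<forall>i<n. u i = c * v i) \<and> b * c = 1"
    using eqpart by blast
  have g4: "0 \<le> lv \<and> 0 \<le> lu \<longrightarrow> lv = 0 \<and> lu = 0 \<and> b * c = 1 \<and> (\<forall>i<n. u i = c * v i)"
  proof
    assume nn: "0 \<le> lv \<and> 0 \<le> lu"
    have t1: "lu * Su \<ge> 0" using nn Supos by simp
    have t2: "c^3 * lv * Sv \<ge> 0" using nn Svpos c3 by simp
    have z: "lu * Su + c^3 * lv * Sv = 0" "E = 0" using t1 t2 main E0 by linarith+
    have "lu * Su = 0" "c^3 * lv * Sv = 0" using z t1 t2 by linarith+
    then have "lv = 0" "lu = 0" using Supos Svpos c3 by auto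
    then show "lv = 0 \<and> lu = 0 \<and> b * c = 1 \<and> (\<forall>i<n. u i = c * v i)" using eqpart[OF z] by blast
  qed
  show ?thesis using g1 g2 g3 g4 unfolding lu_def lv_def Su_def Sv_def E_def a_def by blast
qed

end
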